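(* Let $n$ be a non-negative integer and let $x$ be an odd integer with $x\neq\pm1$. Let $P_n$ denote the $n$-th Legendre polynomial, $P_n(x)=\frac{1}{2^n}\sum_{k=0}^{n}\binom{n}{k}^2(x+1)^k(x-1)^{n-k}$. Then $$\omega_x\big(P_{2n+1}(x)\big)=1+\omega_x\Big((2n+1)\binom{2n}{n}\Big),\qquad \omega_x\big(P_{2n}(x)\big)=\omega_x\Big(\binom{2n}{n}\Big).$$
   Context: For an integer $x$ with $x\neq 0,\pm1$ and a nonzero integer $y$, $\omega_x(y)$ denotes the largest non-negative integer $e$ such that $x^e$ divides $y$. (For odd $x$, $P_n(x)$ is an integer.) *)

theory Defs
  imports "HOL-Computational_Algebra.Computational_Algebra"
begin

definition legendre_P :: "nat \<Rightarrow> int \<Rightarrow> rat" where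
  "legendre_P n x = (1 / 2 ^ n) * of_int (\<Sum>k=0..n. int (n choose k) ^ 2 * (x + 1) ^ k * (x - 1) ^ (n - k))"

text \<open>omega_x(y) is the library notion multiplicity x y.\<close>

end

theory Submission
  imports Defs
begin


lemma fact_decomp:
  fixes p :: nat
  assumes "prime p"
  shows "\<exists>u. \<not> p dvd u \<and> fact s = p ^ (s div p) * fact (s div p) * u"
proof (induction s)
  case 0
  then show ?case using assms by (auto intro: exI[of _ 1] simp: prime_gt_1_nat)
next
  case (Suc s)
  then obtain u where u: "\<not> p dvd u" "fact s = p ^ (s div p) * fact (s div p) * u" by blast
  have p1: "p > 1" using assms prime_gt_1_nat by blast
  show ?case
  proof (cases "p dvd Suc s")
    case True
    then obtain k where k: "Suc s = p * k" by blast
    then have k1: "k \<ge> 1" by (cases k) auto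
    have d1: "Suc s div p = k" using k p1 by simp
    obtain k' where k': "k = Suc k'" using k1 by (cases k) auto
    have se: "s = (p - 1) + p * k'" using k k' p1 by simp
    have se2: "s = (p - 1) + k' * p" using se by (simp add: mult.commute)
    have "s div p = k' + (p - 1) div p" unfolding se2 using div_mult_self1[of p "p - 1" k'] p1 by simp
    then have d2: "s div p = k - 1" using k' p1 by simp
    have "fact (Suc s) = Suc s * fact s" by simp
    also have "\<dots> = p * k * (p ^ (k - 1) * fact (k - 1) * u)" using u k d2 by simp
    also have "\<dots> = p ^ k * (k * fact (k - 1)) * u" using k1
      by (simp add: power_eq_if mult_ac)
    also have "k * fact (k - 1) = (fact k :: nat)" using k' by simp
    finally show ?thesis using u d1 by auto
  next
    case False
    have d: "Suc s div p = s div p" using False p1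
      by (simp add: div_Suc dvd_eq_mod_eq_0)
    have "\<not> p dvd Suc s * u" using False u(1) assms by (metis prime_dvd_mult_iff)
    moreover have "fact (Suc s) = p ^ (Suc s div p) * fact (Suc s div p) * (Suc s * u)"
      using u d by (simp add: algebra_simps)
    ultimately show ?thesis by (intro exI[of _ "Suc s * u"] conjI)
  qed
qed

lemma mult_fact_rec:
  fixes p :: nat
  assumes "prime p"
  shows "multiplicity p (fact s :: nat) = s div p + multiplicity p (fact (s div p) :: nat)"
proof -
  obtain u where u: "\<not> p dvd u" "fact s = p ^ (s div p) * fact (s div p) * u"
    using fact_decomp[OF assms] by blast
  have u0: "u \<noteq> 0" using u(1) by (metis dvd_0_right)
  have pe: "prime_elem p" using assms by (rule prime_imp_prime_elem)
  have f0: "(fact (s div p) :: nat) \<noteq> 0" by simp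
  have p0: "p ^ (s div p) \<noteq> 0" using prime_gt_0_nat[OF assms] by simp
  have "multiplicity p (fact s :: nat) = multiplicity p (p ^ (s div p) * fact (s div p) * u)"
    by (subst u(2)) (rule refl)
  also have "\<dots> = multiplicity p (p ^ (s div p) * fact (s div p)) + multiplicity p u"
    by (rule prime_elem_multiplicity_mult_distrib[OF pe _ u0]) (use f0 p0 in \<open>simp only: mult_eq_0_iff de_Morgan_disj\<close>, simp)
  also have "multiplicity p (p ^ (s div p) * fact (s div p)) = multiplicity p (p ^ (s div p)) + multiplicity p (fact (s div p) :: nat)"
    by (rule prime_elem_multiplicity_mult_distrib[OF pe p0 f0])
  also have "multiplicity p (p ^ (s div p)) = s div p" using pe by (rule multiplicity_prime_power)
  also have "multiplicity p u = 0" using u(1) by (rule not_dvd_imp_multiplicity_0)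
  finally show ?thesis by simp
qed

lemma mult_fact_bound:
  fixes p :: nat
  assumes "prime p" "p \<ge> 3"
  shows "2 * multiplicity p (fact s :: nat) \<le> s - 1"
proof (induction s rule: less_induct)
  case (less s)
  define q where "q = s div p"
  have rec: "multiplicity p (fact s :: nat) = q + multiplicity p (fact q :: nat)"
    unfolding q_def by (rule mult_fact_rec[OF assms(1)])
  show ?case
  proof (cases "q = 0")
    case True
    then show ?thesis using rec by simp
  next
    case False
    have "p * q \<le> s" unfolding q_def by (simp add: times_div_less_eq_dividend)
    moreover have "3 * q \<le> p * q" using assms(2) by (rule mult_le_mono1)
    ultimately have q3: "3 * q \<le> s" by (rule le_trans[rotated])
    then have "q < s" using False by linarith
    then have "2 * multiplicity p (fact q :: nat) \<le> q - 1" by (rule less)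
    then show ?thesis using rec q3 False by linarith
  qed
qed



lemma multiplicity_int_int: "multiplicity (int p) (int m) = multiplicity p m"
proof -
  have "{n. int p ^ n dvd int m} = {n. p ^ n dvd m}"
    by (simp flip: of_nat_power)
  then show ?thesis unfolding multiplicity_def by simp
qed

lemma key_dvd:
  fixes x c :: int and s t e :: nat
  assumes ox: "odd x" and s1: "s \<ge> 1" and st: "2*t \<le> s+1" and dv: "x^e dvd fact s * c"
  shows "x^(e+t) dvd c * x^s"
proof (cases "c = 0")
  case True then show ?thesis by simp
next
  case False
  have x0: "x \<noteq> 0" using ox by auto
  show ?thesis
  proof (rule multiplicity_le_imp_dvd)
    show "x ^ (e + t) \<noteq> 0" using x0 by simp
  next
    fix p :: int assume pp: "prime p"
    have pe: "prime_elem p" using pp by (rule prime_imp_prime_elem)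
    define a where "a = multiplicity p x"
    have fs0: "(fact s :: int) \<noteq> 0" by simp
    have L: "multiplicity p (x ^ (e + t)) = (e + t) * a"
      unfolding a_def by (rule prime_elem_multiplicity_power_distrib[OF pe x0])
    have R: "multiplicity p (c * x ^ s) = multiplicity p c + s * a"
      unfolding a_def using pe False x0
      by (simp add: prime_elem_multiplicity_mult_distrib prime_elem_multiplicity_power_distrib)
    have "multiplicity p (x ^ e) \<le> multiplicity p (fact s * c)"
      by (rule dvd_imp_multiplicity_le[OF dv]) (use False fs0 in simp)
    also have "multiplicity p (fact s * c) = multiplicity p (fact s :: int) + multiplicity p c"
      by (rule prime_elem_multiplicity_mult_distrib[OF pe fs0 False])
    also have "multiplicity p (x ^ e) = e * a"
      unfolding a_def by (rule prime_elem_multiplicity_power_distrib[OF pe x0])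
    finally have E: "e * a \<le> multiplicity p (fact s :: int) + multiplicity p c" .
    show "multiplicity p (x ^ (e + t)) \<le> multiplicity p (c * x ^ s)"
    proof (cases "a = 0")
      case True then show ?thesis using L by simp
    next
      case False
      then have "p dvd x" using not_dvd_imp_multiplicity_0[of p x] False by (auto simp: a_def)
      then have "p \<noteq> 2" using ox by auto
      moreover have "p \<ge> 2" using pp by (simp add: prime_ge_2_int)
      ultimately have p3: "p \<ge> 3" by simp
      have np: "prime (nat p)" using pp prime_int_nat_transfer by blast
      have "multiplicity p (fact s :: int) = multiplicity (int (nat p)) (int (fact s))"
      proof -
        have "int (nat p) = p" using p3 by simp
        moreover have "int (fact s) = (fact s :: int)" by (rule of_nat_fact)
        ultimately show ?thesis by simp
      qed
      also have "\<dots> = multiplicity (nat p) (fact s :: nat)" by (rule multiplicity_int_int)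
      finally have vdef: "multiplicity p (fact s :: int) = multiplicity (nat p) (fact s :: nat)" .
      have "2 * multiplicity (nat p) (fact s :: nat) \<le> s - 1"
        by (rule mult_fact_bound[OF np]) (use p3 in linarith)
      then have V: "multiplicity p (fact s :: int) \<le> s - t" using vdef st s1 by linarith
      have "s - t \<le> (s - t) * a" using False by simp
      then have "multiplicity p (fact s :: int) + t * a \<le> (s - t) * a + t * a" using V by linarith
      also have "\<dots> = s * a"
      proof -
        have ts: "t \<le> s" using st s1 by linarith
        have "(s - t) * a + t * a = (s - t + t) * a" by (rule add_mult_distrib[symmetric])
        also have "s - t + t = s" using ts by simp
        finally show ?thesis .
      qed
      finally have "multiplicity p (fact s :: int) + t * a \<le> s * a" .
      then show ?thesis using L R E by (simp add: add_mult_distrib)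
    qed
  qed
qed



lemma coeff_lin_pow:
  fixes a :: int
  shows "coeff ([:1, a:] ^ n) k = int (n choose k) * a ^ k"
proof (induction n arbitrary: k)
  case 0
  then show ?case by (cases k) simp_all
next
  case (Suc n)
  have e: "[:1, a:] ^ Suc n = [:1, a:] ^ n + pCons 0 (smult a ([:1, a:] ^ n))"
    by simp
  show ?case
  proof (cases k)
    case 0
    then show ?thesis unfolding e using Suc.IH[of 0] by simp
  next
    case (Suc k')
    have "coeff ([:1, a:] ^ Suc n) k = int (n choose Suc k') * a ^ Suc k' + a * (int (n choose k') * a ^ k')"
      unfolding e Suc using Suc.IH[of "Suc k'"] Suc.IH[of k'] by simp
    also have "\<dots> = int (Suc n choose k) * a ^ k" unfolding Suc by (simp add: algebra_simps)
    finally show ?thesis .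
  qed
qed

lemma AB_eq:
  fixes x :: int
  shows "[:1, x+1:] * [:1, x-1:] = monom (-1) 2 + [:1, x:] ^ 2"
  by (rule poly_eqI) (simp add: coeff_pCons power2_eq_square coeff_monom algebra_simps split: nat.splits)

lemma legendre_sum_identity:
  fixes x :: int
  shows "(\<Sum>k=0..n. int (n choose k) ^ 2 * (x + 1) ^ k * (x - 1) ^ (n - k)) =
         (\<Sum>j\<le>n div 2. (-1) ^ j * int (n choose j) * int ((2*n - 2*j) choose n) * x ^ (n - 2*j))"
proof -
  define A B Cp D where "A = [:1, x+1:]" and "B = [:1, x-1:]" and "Cp = [:1, x:]" and "D = (monom (-1) 2 :: int poly)"
  have "(\<Sum>k=0..n. int (n choose k) ^ 2 * (x + 1) ^ k * (x - 1) ^ (n - k)) =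
        (\<Sum>k\<le>n. coeff (A ^ n) k * coeff (B ^ n) (n - k))"
    unfolding atLeast0AtMost A_def B_def coeff_lin_pow
  proof (rule sum.cong[OF refl])
    fix k assume "k \<in> {..n}"
    then have "n choose (n - k) = n choose k" by (simp add: binomial_symmetric[symmetric])
    then show "int (n choose k) ^ 2 * (x + 1) ^ k * (x - 1) ^ (n - k) =
          int (n choose k) * (x + 1) ^ k * (int (n choose (n - k)) * (x - 1) ^ (n - k))"
      by (simp add: power2_eq_square)
  qed
  also have "\<dots> = coeff (A ^ n * B ^ n) n" by (simp add: coeff_mult)
  also have "A ^ n * B ^ n = (A * B) ^ n" by (simp add: power_mult_distrib)
  also have "(A * B) ^ n = (D + Cp ^ 2) ^ n" unfolding A_def B_def Cp_def D_def by (simp only: AB_eq)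
  also have "\<dots> = (\<Sum>k\<le>n. of_nat (n choose k) * D ^ k * (Cp ^ 2) ^ (n - k))"
    by (rule binomial_ring)
  also have "coeff \<dots> n = (\<Sum>k\<le>n. coeff (monom (int (n choose k) * (-1) ^ k) (2 * k) * Cp ^ (2 * (n - k))) n)"
    unfolding coeff_sum
  proof (rule sum.cong[OF refl])
    fix k
    have "of_nat (n choose k) * D ^ k * (Cp ^ 2) ^ (n - k) = monom (int (n choose k) * (-1) ^ k) (2 * k) * Cp ^ (2 * (n - k))"
      unfolding D_def monom_power by (simp add: of_nat_monom mult_monom power_mult mult.commute power_mult_distrib flip: power_mult)
    then show "coeff (of_nat (n choose k) * D ^ k * (Cp ^ 2) ^ (n - k)) n =
          coeff (monom (int (n choose k) * (-1) ^ k) (2 * k) * Cp ^ (2 * (n - k))) n" by simp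
  qed
  also have "\<dots> = (\<Sum>k\<le>n. if n < 2 * k then 0 else (-1) ^ k * int (n choose k) * int ((2*n - 2*k) choose n) * x ^ (n - 2*k))"
  proof (rule sum.cong[OF refl])
    fix k assume "k \<in> {..n}"
    show "coeff (monom (int (n choose k) * (-1) ^ k) (2 * k) * Cp ^ (2 * (n - k))) n =
      (if n < 2 * k then 0 else (-1) ^ k * int (n choose k) * int ((2*n - 2*k) choose n) * x ^ (n - 2*k))"
    proof (cases "n < 2 * k")
      case True then show ?thesis by (simp add: coeff_monom_mult)
    next
      case False
      have "(2 * (n - k)) choose (n - 2 * k) = (2*n - 2*k) choose n"
        using False by (subst binomial_symmetric) (auto simp: algebra_simps)
      then show ?thesis using False unfolding Cp_def
        by (simp add: coeff_monom_mult coeff_lin_pow algebra_simps)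
    qed
  qed
  also have "\<dots> = (\<Sum>k\<le>n div 2. (-1) ^ k * int (n choose k) * int ((2*n - 2*k) choose n) * x ^ (n - 2*k))"
  proof -
    have "(\<Sum>k\<le>n. if n < 2 * k then 0 else (-1) ^ k * int (n choose k) * int ((2*n - 2*k) choose n) * x ^ (n - 2*k))
        = (\<Sum>k\<le>n div 2. if n < 2 * k then 0 else (-1) ^ k * int (n choose k) * int ((2*n - 2*k) choose n) * x ^ (n - 2*k))"
      by (rule sum.mono_neutral_right) auto
    also have "\<dots> = (\<Sum>k\<le>n div 2. (-1) ^ k * int (n choose k) * int ((2*n - 2*k) choose n) * x ^ (n - 2*k))"
      by (rule sum.cong) auto
    finally show ?thesis .
  qed
  finally show ?thesis .
qed



definition acoef :: "nat \<Rightarrow> nat \<Rightarrow> nat" where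
  "acoef n j = (n choose j) * ((2*n - 2*j) choose n)"

lemma acoef_fact:
  assumes "2*j \<le> n"
  shows "acoef n j * fact (n - 2*j) * (fact j * fact (n - j)) = (fact (2*n - 2*j) :: nat)"
proof -
  have h1: "fact j * fact (n - j) * (n choose j) = (fact n :: nat)"
    by (rule binomial_fact_lemma) (use assms in simp)
  have h2: "fact n * fact (2*n - 2*j - n) * ((2*n - 2*j) choose n) = (fact (2*n - 2*j) :: nat)"
    by (rule binomial_fact_lemma) (use assms in simp)
  have e: "2*n - 2*j - n = n - 2*j" by simp
  have "acoef n j * fact (n - 2*j) * (fact j * fact (n - j)) =
        (fact j * fact (n - j) * (n choose j)) * fact (n - 2*j) * ((2*n - 2*j) choose n)"
    unfolding acoef_def by (simp only: mult_ac)
  also have "\<dots> = fact (2*n - 2*j)" using h1 h2 e by (simp only: mult_ac)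
  finally show ?thesis .
qed

lemma acoef_rec:
  assumes "2*(i+1) \<le> n"
  shows "acoef n i * fact (n - 2*i) = 2*(i+1)*(2*n-2*i-1) * (acoef n (i+1) * fact (n - 2*(i+1)))"
proof -
  have "2*i+2 \<le> n" using assms by simp
  then obtain d where nd: "n = 2*i + 2 + d" using le_Suc_ex by blast
  define X where "X = acoef n i"
  define Y where "Y = acoef n (i+1)"
  have KX: "X * fact (d + 2) * (fact i * fact (i + 2 + d)) = (fact (2*i + 4 + 2*d) :: nat)"
    using acoef_fact[of i n] assms unfolding X_def nd by (simp add: algebra_simps)
  have KY: "Y * fact d * (fact (i+1) * fact (i + 1 + d)) = (fact (2*i + 2 + 2*d) :: nat)"
    using acoef_fact[of "i+1" n] assms unfolding Y_def nd by (simp add: algebra_simps)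
  have g2: "\<And>m. (fact (Suc (Suc m)) :: nat) = Suc (Suc m) * (Suc m * fact m)" by simp
  have g1: "\<And>m. (fact (Suc m) :: nat) = Suc m * fact m" by simp
  have f1: "fact (2*i + 4 + 2*d) = (2*i+4+2*d) * ((2*i+3+2*d) * (fact (2*i + 2 + 2*d) :: nat))"
  proof -
    have e1: "Suc (2*i + 2 + 2*d) = 2*i+3+2*d" by simp
    have e2: "Suc (2*i + 3 + 2*d) = 2*i+4+2*d" by simp
    show ?thesis using g2[of "2*i + 2 + 2*d"] by (simp only: e1 e2)
  qed
  have f2: "fact (i + 2 + d) = (i + 2 + d) * (fact (i + 1 + d) :: nat)"
  proof -
    have e1: "Suc (i + 1 + d) = i + 2 + d" by simp
    show ?thesis using g1[of "i + 1 + d"] by (simp only: e1)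
  qed
  have f3: "fact (i + 1) = (i + 1) * (fact i :: nat)" by simp
  have F0: "fact i * fact (i + 2 + d) \<noteq> (0::nat)" by simp
  have "X * fact (d + 2) * (fact i * fact (i + 2 + d)) =
        (2*(i+1)*(2*i+3+2*d) * (Y * fact d)) * (fact i * fact (i + 2 + d))"
  proof -
    have "X * fact (d + 2) * (fact i * fact (i + 2 + d)) = (2*i+4+2*d) * ((2*i+3+2*d) * (Y * fact d * (fact (i+1) * fact (i + 1 + d))))"
      using KX KY f1 by simp
    also have "\<dots> = (2*(i+1)*(2*i+3+2*d) * (Y * fact d)) * (fact i * fact (i + 2 + d))"
      unfolding f2 f3 by (simp add: algebra_simps)
    finally show ?thesis .
  qed
  then have "X * fact (d + 2) = 2*(i+1)*(2*i+3+2*d) * (Y * fact d)"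
    by (rule iffD1[OF mult_right_cancel[OF F0]])
  note XE = this
  have e1: "n - 2*i = d+2" and e2: "2*n-2*i-1 = 2*i+3+2*d" and e3: "n - 2*(i+1) = d" using nd by simp_all
  show ?thesis unfolding e1 e2 e3 X_def[symmetric] Y_def[symmetric] by (rule XE)
qed

lemma acoef_dvd:
  assumes "j \<le> j'" "2*j' \<le> n"
  shows "acoef n j' * fact (n - 2*j') dvd acoef n j * fact (n - 2*j)"
proof -
  obtain k where k: "j' = j + k" using assms(1) le_Suc_ex by blast
  have "2*(j + k) \<le> n \<Longrightarrow> acoef n (j + k) * fact (n - 2*(j + k)) dvd acoef n j * fact (n - 2*j)" for j
  proof (induction k arbitrary: j)
    case 0 then show ?case by simp
  next
    case (Suc k)
    have "acoef n (j + Suc k) * fact (n - 2*(j + Suc k)) dvd acoef n (j+1) * fact (n - 2*(j+1))"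
      using Suc.IH[of "j+1"] Suc.prems by simp
    also have "\<dots> dvd acoef n j * fact (n - 2*j)"
      using acoef_rec[of j n] Suc.prems by simp
    finally show ?case .
  qed
  then show ?thesis using assms k by simp
qed


definition Qs :: "nat \<Rightarrow> int \<Rightarrow> int" where
  "Qs n x = (\<Sum>k=0..n. int (n choose k) ^ 2 * (x + 1) ^ k * (x - 1) ^ (n - k))"

lemma Qs_dvd:
  assumes "odd x"
  shows "2 ^ n dvd Qs n x"
  unfolding Qs_def
proof (rule dvd_sum)
  fix k assume k: "k \<in> {0..n}"
  have "2 dvd x + 1" "2 dvd x - 1" using assms by auto
  then have "2 ^ k dvd (x + 1) ^ k" "2 ^ (n - k) dvd (x - 1) ^ (n - k)" by (auto intro: dvd_power_same)
  then have "2 ^ k * 2 ^ (n - k) dvd (x + 1) ^ k * (x - 1) ^ (n - k)" by (rule mult_dvd_mono)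
  moreover have "(2::int) ^ k * 2 ^ (n - k) = 2 ^ n" using k by (simp flip: power_add)
  ultimately have "2 ^ n dvd (x + 1) ^ k * (x - 1) ^ (n - k)" by simp
  then show "2 ^ n dvd int (n choose k) ^ 2 * (x + 1) ^ k * (x - 1) ^ (n - k)"
    by (simp add: mult.assoc)
qed

lemma legendre_P_Qs:
  assumes "odd x"
  shows "legendre_P n x = of_int (Qs n x div 2 ^ n)"
proof -
  obtain p where p: "Qs n x = 2 ^ n * p" using Qs_dvd[OF assms] by blast
  have "legendre_P n x = (1 / 2 ^ n) * of_int (Qs n x)" unfolding legendre_P_def Qs_def by simp
  also have "\<dots> = of_int p" unfolding p by simp
  finally show ?thesis using p by simp
qed

lemma Qs_expand:
  "Qs n x = (\<Sum>j\<le>n div 2. (-1) ^ j * int (acoef n j) * x ^ (n - 2*j))"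
  unfolding Qs_def legendre_sum_identity acoef_def by (simp add: mult.assoc)

lemma main_gen:
  fixes x :: int
  assumes ox: "odd x" and x1: "x \<noteq> 1" and x2: "x \<noteq> -1"
    and d1: "x ^ e dvd int (acoef n (n div 2))" and d2: "\<not> x ^ (e + 1) dvd int (acoef n (n div 2))"
  shows "multiplicity x (Qs n x div 2 ^ n) = e + n mod 2"
proof -
  define m where "m = n div 2"
  define r where "r = n mod 2"
  have nmr: "n = 2*m + r" unfolding m_def r_def by simp
  have r1: "r \<le> 1" unfolding r_def by simp
  have x0: "x \<noteq> 0" using ox by auto
  define f where "f = (\<lambda>j. (-1) ^ j * int (acoef n j) * x ^ (n - 2*j))"
  define R where "R = (\<Sum>j<m. f j)"
  have QR: "Qs n x = R + (-1) ^ m * int (acoef n m) * x ^ r"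
  proof -
    have "Qs n x = (\<Sum>j<Suc m. f j)" unfolding Qs_expand f_def m_def lessThan_Suc_atMost by simp
    also have "\<dots> = R + f m" unfolding R_def by simp
    also have "f m = (-1) ^ m * int (acoef n m) * x ^ r" unfolding f_def using nmr by simp
    finally show ?thesis .
  qed
  have Rdvd: "x ^ (e + r + 1) dvd R"
    unfolding R_def
  proof (rule dvd_sum)
    fix j assume "j \<in> {..<m}"
    then have jm: "j < m" by simp
    define s where "s = n - 2*j"
    have s2: "s \<ge> r + 2" unfolding s_def using jm nmr by simp
    have "acoef n m * fact (n - 2*m) dvd acoef n j * fact (n - 2*j)"
      by (rule acoef_dvd) (use jm nmr in simp_all)
    moreover have "fact (n - 2*m) = (1::nat)" using nmr r1 by (cases r) simp_all
    ultimately have "acoef n m dvd acoef n j * fact s" unfolding s_def by simp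
    then have "int (acoef n m) dvd int (acoef n j * fact s)" by (simp only: of_nat_dvd_iff)
    then have "int (acoef n m) dvd fact s * int (acoef n j)" by (simp add: of_nat_fact mult.commute)
    with d1 have dvdA: "x ^ e dvd fact s * int (acoef n j)" unfolding m_def by (rule dvd_trans)
    have "x ^ (e + (r + 1)) dvd int (acoef n j) * x ^ s"
      by (rule key_dvd[OF ox _ _ dvdA]) (use s2 r1 in simp_all)
    then have "x ^ (e + r + 1) dvd (-1) ^ j * (int (acoef n j) * x ^ s)"
      by (simp add: add.assoc)
    then show "x ^ (e + r + 1) dvd f j" unfolding f_def s_def by (simp add: mult.assoc)
  qed
  obtain p where p: "Qs n x = 2 ^ n * p" using Qs_dvd[OF ox] by blast
  have pdef: "Qs n x div 2 ^ n = p" unfolding p by simp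
  have cop: "coprime (x ^ k) (2 ^ n)" for k
  proof -
    have "coprime 2 x" by (rule prime_imp_coprime) (use ox in auto)
    then show ?thesis by (simp add: coprime_commute)
  qed
  have A: "x ^ (e + r) dvd p"
  proof -
    have "x ^ (e + r) dvd R" using Rdvd by (rule dvd_trans[rotated]) (simp add: le_imp_power_dvd)
    moreover have "x ^ e * x ^ r dvd int (acoef n m) * x ^ r" using d1 unfolding m_def by simp
    then have "x ^ (e + r) dvd (-1) ^ m * int (acoef n m) * x ^ r"
      by (simp add: power_add mult.assoc)
    ultimately have "x ^ (e + r) dvd Qs n x" unfolding QR by (rule dvd_add)
    then have "x ^ (e + r) dvd p * 2 ^ n" unfolding p by (simp add: mult.commute)
    then show ?thesis using coprime_dvd_mult_left_iff[OF cop] by blast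
  qed
  have B: "\<not> x ^ Suc (e + r) dvd p"
  proof
    assume "x ^ Suc (e + r) dvd p"
    then have "x ^ (e + r + 1) dvd Qs n x" unfolding p by simp
    then have "x ^ (e + r + 1) dvd Qs n x - R" using Rdvd by (rule dvd_diff)
    then have h: "x ^ (e + r + 1) dvd (-1) ^ m * (int (acoef n m) * x ^ r)" unfolding QR by (simp add: mult.assoc)
    have "(int (acoef n m) * x ^ r) = (-1) ^ m * ((-1) ^ m * (int (acoef n m) * x ^ r))"
      by (simp flip: power_mult_distrib mult.assoc)
    with h have "x ^ (e + r + 1) dvd int (acoef n m) * x ^ r" by (metis dvd_mult)
    then have "x ^ (e + 1) * x ^ r dvd int (acoef n m) * x ^ r" by (simp add: power_add algebra_simps)
    then have "x ^ (e + 1) dvd int (acoef n m)" using x0 by simp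
    with d2 show False unfolding m_def by simp
  qed
  have "multiplicity x p = e + r" using A B by (rule multiplicity_eqI)
  then show ?thesis unfolding pdef r_def .
qed

lemma mult_char:
  fixes x y :: int
  assumes "x \<noteq> 1" "x \<noteq> -1" "y \<noteq> 0"
  shows "x ^ multiplicity x y dvd y" "\<not> x ^ (multiplicity x y + 1) dvd y"
proof -
  show "x ^ multiplicity x y dvd y" by (rule multiplicity_dvd)
  have nu: "\<not> is_unit x" using assms by auto
  show "\<not> x ^ (multiplicity x y + 1) dvd y"
    using power_dvd_iff_le_multiplicity[OF assms(3) nu, of "multiplicity x y + 1"] by simp
qed

theorem corollary7:
  fixes n :: nat and x :: int
  assumes "odd x" and "x \<noteq> 1" and "x \<noteq> -1"
  shows "\<exists>p q :: int. of_int p = legendre_P (2*n+1) x \<and> of_int q = legendre_P (2*n) x \<and>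
           multiplicity x p = 1 + multiplicity x (int (2*n+1) * int ((2*n) choose n)) \<and>
           multiplicity x q = multiplicity x (int ((2*n) choose n))"
proof -
  define p where "p = Qs (2*n+1) x div 2 ^ (2*n+1)"
  define q where "q = Qs (2*n) x div 2 ^ (2*n)"
  have cop2: "coprime (x ^ k) 2" for k
  proof -
    have "coprime 2 x" by (rule prime_imp_coprime) (use assms(1) in auto)
    then show ?thesis by (simp add: coprime_commute)
  qed
  have Cpos: "((2*n) choose n) > 0" by simp
  have ae: "acoef (2*n) n = (2*n) choose n" unfolding acoef_def by simp
  define e0 where "e0 = multiplicity x (int ((2*n) choose n))"
  have Y0: "int ((2*n) choose n) \<noteq> 0" using Cpos by simp
  have "multiplicity x q = e0 + (2*n) mod 2"
    unfolding q_def
    by (rule main_gen[OF assms]) (use mult_char[OF assms(2,3) Y0] in \<open>simp_all add: ae e0_def\<close>)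
  then have mq: "multiplicity x q = multiplicity x (int ((2*n) choose n))" unfolding e0_def by simp
  have ao: "acoef (2*n+1) ((2*n+1) div 2) = 2 * ((2*n+1) * ((2*n) choose n))"
  proof -
    define b where "b = (2*n+1) choose n"
    define c where "c = (2*n) choose n"
    have h1: "(2*n+1) div 2 = n" by simp
    have h2: "2*(2*n+1) - 2*n = Suc (2*n+1)" by simp
    have h3: "Suc (2*n+1) choose (2*n+1) = Suc (2*n+1)" by (rule binomial_Suc_n)
    have h4: "Suc n * ((2*n+1) choose Suc n) = (2*n+1) * ((2*n+1-1) choose n)"
      by (rule binomial_absorption)
    have h5: "(2*n+1) choose Suc n = b"
      unfolding b_def using binomial_symmetric[of n "2*n+1"] by simp
    have h6: "2*n+1-1 = 2*n" by simp
    have h4': "Suc n * b = (2*n+1) * c" using h4 unfolding h5 h6 c_def .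
    have "acoef (2*n+1) ((2*n+1) div 2) = b * Suc (2*n+1)"
      unfolding acoef_def h1 h2 h3 b_def by (rule refl)
    also have "\<dots> = 2 * (Suc n * b)" by (simp add: algebra_simps)
    also have "\<dots> = 2 * ((2*n+1) * ((2*n) choose n))" unfolding h4' c_def by (rule refl)
    finally show ?thesis .
  qed
  define Y where "Y = int (2*n+1) * int ((2*n) choose n)"
  define e1 where "e1 = multiplicity x Y"
  have Y1: "Y \<noteq> 0" unfolding Y_def using Cpos by simp
  have aoY: "int (acoef (2*n+1) ((2*n+1) div 2)) = Y * 2" unfolding ao Y_def by (simp add: algebra_simps)
  have "multiplicity x p = e1 + (2*n+1) mod 2"
    unfolding p_def
  proof (rule main_gen[OF assms])
    show "x ^ e1 dvd int (acoef (2 * n + 1) ((2 * n + 1) div 2))"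
      unfolding aoY e1_def using mult_char(1)[OF assms(2,3) Y1] by simp
    show "\<not> x ^ (e1 + 1) dvd int (acoef (2 * n + 1) ((2 * n + 1) div 2))"
      unfolding aoY e1_def using mult_char(2)[OF assms(2,3) Y1] coprime_dvd_mult_left_iff[OF cop2] by blast
  qed
  then have mp: "multiplicity x p = 1 + multiplicity x (int (2*n+1) * int ((2*n) choose n))"
    unfolding e1_def Y_def by simp
  show ?thesis
    by (rule exI[of _ p], rule exI[of _ q])
       (use mp mq legendre_P_Qs[OF assms(1)] in \<open>simp add: p_def q_def\<close>)
qed

end
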